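(* Let $\eta>0$ and $W\ge0$. Let $x_t^{s}$ ($t\in[T]$, $t-W\le s\le t$) be the iterates of RHGD, and let $x^{(k)}$ be the iterates of offline projected gradient descent $$x_t^{(k)}=\Pi_X\big(x_t^{(k-1)}-\eta\, g_t(x_{t-1}^{(k-1)},x_t^{(k-1)},x_{t+1}^{(k-1)})\big),\quad t\in[T],\ k\ge1,$$ with $x_0^{(k)}=x_0$, both using the same stepsize $\eta$. If $x_t^{(0)}=x_t^{t-W}$ for all $t\in[T]$, then $x_t^{(W)}=x_t^t$ for all $t\in[T]$.
   Context: $X\subseteq\mathbb R^n$ is compact and convex, $\Pi_X$ is Euclidean projection onto $X$, $\beta\ge0$, $x_0\in X$, and $f_1,\dots,f_T:\mathbb R^n\to\mathbb R$ are differentiable. Partial gradients: for $t<T$, $g_t(a,b,c)=\nabla f_t(b)+\beta(2b-a-c)$; for $t=T$, $g_T(a,b,c)=\nabla f_T(b)+\beta(b-a)$, which does not depend on $c$. These are the partial gradients of $C_1^T(x)=\sum_t(f_t(x_t)+\frac\beta2\|x_t-x_{t-1}\|^2)$ with respect to $x_t$. RHGD with window $W$, stepsizes $\gamma,\eta$: - Initialization: $x_1^{1-W}=x_0$, and $x_t^{t-W}=\Pi_X(x_{t-1}^{t-1-W}-\gamma\nabla f_{t-1}(x_{t-1}^{t-1-W}))$ for $2\le t\le T$. - Updates: for $s=t-W+1,\dots,t$, $x_t^s=\Pi_X(x_t^{s-1}-\eta g_t(x_{t-1}^{s-2},x_t^{s-1},x_{t+1}^{s}))$, with the convention $x_0^s=x_0$.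 - Output at stage $t$: $x_t^t$. *)

theory Defs
  imports "HOL-Analysis.Analysis"
begin

definition grad :: "(real^'n \<Rightarrow> real) \<Rightarrow> real^'n \<Rightarrow> real^'n" where
  "grad f x = (SOME G. (f has_derivative (\<lambda>h. G \<bullet> h)) (at x))"

definition proj :: "(real^'n) set \<Rightarrow> real^'n \<Rightarrow> real^'n" where
  "proj X y = closest_point X y"

text \<open>Partial gradient g_t(a,b,c) of C_1^T with respect to x_t.\<close>
definition pgrad :: "(nat \<Rightarrow> real^'n \<Rightarrow> real) \<Rightarrow> real \<Rightarrow> nat \<Rightarrow> nat
    \<Rightarrow> real^'n \<Rightarrow> real^'n \<Rightarrow> real^'n \<Rightarrow> real^'n" where
  "pgrad f \<beta> T t a b c =
     (if t < T then grad (f t) b + \<beta> *\<^sub>R (2 *\<^sub>R b - a - c)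
      else grad (f T) b + \<beta> *\<^sub>R (b - a))"

text \<open>x t s is the RHGD iterate x_t^s (s an integer, t-W \<le> s \<le> t);
  x 0 s = x0 is the convention x_0^s = x_0.\<close>
definition is_RHGD :: "(real^'n) set \<Rightarrow> (nat \<Rightarrow> real^'n \<Rightarrow> real) \<Rightarrow> real \<Rightarrow> nat \<Rightarrow> nat
    \<Rightarrow> real \<Rightarrow> real \<Rightarrow> real^'n \<Rightarrow> (nat \<Rightarrow> int \<Rightarrow> real^'n) \<Rightarrow> bool" where
  "is_RHGD X f \<beta> T W \<gamma> \<eta> x0 x \<longleftrightarrow>
     (\<forall>s. x 0 s = x0) \<and>
     x 1 (1 - int W) = x0 \<and>
     (\<forall>t. 2 \<le> t \<and> t \<le> T \<longrightarrow>
        x t (int t - int W) =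
          proj X (x (t-1) (int (t-1) - int W) - \<gamma> *\<^sub>R grad (f (t-1)) (x (t-1) (int (t-1) - int W)))) \<and>
     (\<forall>t s. 1 \<le> t \<and> t \<le> T \<and> int t - int W + 1 \<le> s \<and> s \<le> int t \<longrightarrow>
        x t s = proj X (x t (s-1) - \<eta> *\<^sub>R pgrad f \<beta> T t (x (t-1) (s-2)) (x t (s-1)) (x (t+1) s)))"

definition is_PGD :: "(real^'n) set \<Rightarrow> (nat \<Rightarrow> real^'n \<Rightarrow> real) \<Rightarrow> real \<Rightarrow> nat
    \<Rightarrow> real \<Rightarrow> real^'n \<Rightarrow> (nat \<Rightarrow> nat \<Rightarrow> real^'n) \<Rightarrow> bool" where
  "is_PGD X f \<beta> T \<eta> x0 y \<longleftrightarrow>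
     (\<forall>k. y 0 k = x0) \<and>
     (\<forall>t k. 1 \<le> t \<and> t \<le> T \<and> 1 \<le> k \<longrightarrow>
        y t k = proj X (y t (k-1) - \<eta> *\<^sub>R pgrad f \<beta> T t (y (t-1) (k-1)) (y t (k-1)) (y (t+1) (k-1))))"

end

theory Submission
  imports Defs
begin

lemma pgrad_T: "pgrad f \<beta> T T a b c = pgrad f \<beta> T T a b c'"
  by (simp add: pgrad_def)

theorem lemma2:
  fixes X :: "(real^'n) set" and f :: "nat \<Rightarrow> real^'n \<Rightarrow> real"
    and \<beta> \<gamma> \<eta> :: real and T W :: nat and x0 :: "real^'n"
    and x :: "nat \<Rightarrow> int \<Rightarrow> real^'n" and y :: "nat \<Rightarrow> nat \<Rightarrow> real^'n"
  assumes "compact X" and "convex X" and "x0 \<in> X" and "\<beta> \<ge> 0" and "\<eta> > 0"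
    and "\<And>t z. f t differentiable (at z)"
    and "is_RHGD X f \<beta> T W \<gamma> \<eta> x0 x"
    and "is_PGD X f \<beta> T \<eta> x0 y"
    and "\<forall>t. 1 \<le> t \<and> t \<le> T \<longrightarrow> y t 0 = x t (int t - int W)"
  shows "\<forall>t. 1 \<le> t \<and> t \<le> T \<longrightarrow> y t W = x t (int t)"
proof -
  note R = assms(7)[unfolded is_RHGD_def]
  note P = assms(8)[unfolded is_PGD_def]
  have x0: "\<And>s. x 0 s = x0" using R by blast
  have y0: "\<And>k. y 0 k = x0" using P by blast
  have xs: "\<And>t s. 1 \<le> t \<Longrightarrow> t \<le> T \<Longrightarrow> int t - int W + 1 \<le> s \<Longrightarrow> s \<le> int t \<Longrightarrow>
        x t s = proj X (x t (s-1) - \<eta> *\<^sub>R pgrad f \<beta> T t (x (t-1) (s-2)) (x t (s-1)) (x (t+1) s))"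
    using R by blast
  have ys: "\<And>t k. 1 \<le> t \<Longrightarrow> t \<le> T \<Longrightarrow> 1 \<le> k \<Longrightarrow>
        y t k = proj X (y t (k-1) - \<eta> *\<^sub>R pgrad f \<beta> T t (y (t-1) (k-1)) (y t (k-1)) (y (t+1) (k-1)))"
    using P by blast
  have main: "k \<le> W \<Longrightarrow> \<forall>t. 1 \<le> t \<and> t \<le> T \<longrightarrow> y t k = x t (int t - int W + int k)" for k
  proof (induction k)
    case 0
    then show ?case using assms(9) by simp
  next
    case (Suc k)
    hence IH: "\<And>t. 1 \<le> t \<Longrightarrow> t \<le> T \<Longrightarrow> y t k = x t (int t - int W + int k)" by auto
    show ?case
    proof (intro allI impI)
      fix t assume t: "1 \<le> t \<and> t \<le> T"
      define s where "s = int t - int W + int (Suc k)"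
      have "s - 1 = int t - int W + int k" by (simp add: s_def)
      hence e1: "y t k = x t (s-1)" using IH t by simp
      have e2: "y (t-1) k = x (t-1) (s-2)"
      proof (cases "t = 1")
        case True then show ?thesis using x0 y0 by simp
      next
        case False
        hence "y (t-1) k = x (t-1) (int (t-1) - int W + int k)" using IH t by auto
        also have "int (t-1) - int W + int k = s - 2" using False t by (simp add: s_def of_nat_diff)
        finally show ?thesis .
      qed
      have e3: "pgrad f \<beta> T t (y (t-1) k) (y t k) (y (t+1) k) =
                pgrad f \<beta> T t (x (t-1) (s-2)) (x t (s-1)) (x (t+1) s)"
      proof (cases "t = T")
        case True then show ?thesis using e1 e2 pgrad_T by metis
      next
        case False
        hence "y (t+1) k = x (t+1) (int (t+1) - int W + int k)" using IH t by auto
        also have "int (t+1) - int W + int k = s" by (simp add: s_def)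
        finally show ?thesis using e1 e2 by simp
      qed
      have "y t (Suc k) = proj X (y t k - \<eta> *\<^sub>R pgrad f \<beta> T t (y (t-1) k) (y t k) (y (t+1) k))"
        using ys[of t "Suc k"] t by simp
      also have "\<dots> = x t s" using xs[of t s] t Suc.prems e1 e3 by (simp add: s_def)
      finally show "y t (Suc k) = x t (int t - int W + int (Suc k))" by (simp add: s_def)
    qed
  qed
  show ?thesis using main[of W] by simp
qed

end
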